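(* Let $n\ge1$, let $a=(a_m)_{m\ge0}$, $b=(b_m)_{m\ge0}$ be complex sequences with $b_0=0$ and $b_m\ne0$ for $m\ge1$, and let $\omega(u)=\sum_{i=1}^n\tilde T_{ii}(u)$ in $OY(\mathfrak{gl}_n,a,b)[[u^{-1}]]$. Then $[\omega(u),\omega(v)]=0$, i.e. all coefficients of $\omega(u)$ pairwise commute.
   Context: $OY(\mathfrak{gl}_n,a,b)$ is the unital associative $\mathbb C$-algebra with generators $\tilde t^{(r)}_{ij}$ ($1\le i,j\le n$, $r\ge1$) and defining relations $[\tilde t^{(r+1)}_{ij}+a_r\tilde t^{(r)}_{ij}+b_r\tilde t^{(r-1)}_{ij},\tilde t^{(s)}_{kl}]-[\tilde t^{(r)}_{ij},\tilde t^{(s+1)}_{kl}+a_s\tilde t^{(s)}_{kl}+b_s\tilde t^{(s-1)}_{kl}]=\tilde t^{(r)}_{kj}\tilde t^{(s)}_{il}-\tilde t^{(s)}_{kj}\tilde t^{(r)}_{il}$ for all $r,s\ge0$ and all $i,j,k,l$, with $\tilde t^{(0)}_{ij}=\delta_{ij}$, $\tilde t^{(-1)}_{ij}=0$; $\tilde T_{ij}(u)=\delta_{ij}+\sum_{r\ge1}\tilde t^{(r)}_{ij}u^{-r}$. *)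

theory Defs
  imports Complex_Main
begin

text \<open>A unital associative complex algebra is a ring A together with a
  unital ring homomorphism from the complex numbers into the centre of A.\<close>
definition complex_alg_embedding :: "(complex \<Rightarrow> 'a::ring_1) \<Rightarrow> bool" where
  "complex_alg_embedding e \<longleftrightarrow>
     e 1 = 1 \<and> (\<forall>x y. e (x + y) = e x + e y) \<and> (\<forall>x y. e (x * y) = e x * e y)
     \<and> (\<forall>c z. e c * z = z * e c)"

definition OY_ext :: "(nat \<Rightarrow> nat \<Rightarrow> nat \<Rightarrow> 'a::ring_1) \<Rightarrow> int \<Rightarrow> nat \<Rightarrow> nat \<Rightarrow> 'a" where
  "OY_ext t r i j = (if r < 0 then 0 else if r = 0 then (if i = j then 1 else 0) else t (nat r) i j)"

definition commutator :: "'a::ring \<Rightarrow> 'a \<Rightarrow> 'a" where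
  "commutator x y = x * y - y * x"

definition OY_relations ::
  "nat \<Rightarrow> (nat \<Rightarrow> complex) \<Rightarrow> (nat \<Rightarrow> complex) \<Rightarrow> (complex \<Rightarrow> 'a::ring_1)
     \<Rightarrow> (nat \<Rightarrow> nat \<Rightarrow> nat \<Rightarrow> 'a) \<Rightarrow> bool" where
  "OY_relations n a b e t \<longleftrightarrow>
    (\<forall>r s i j k l. i \<in> {1..n} \<longrightarrow> j \<in> {1..n} \<longrightarrow> k \<in> {1..n} \<longrightarrow> l \<in> {1..n} \<longrightarrow>
      (let T = OY_ext t in
        commutator (T (int r + 1) i j + e (a r) * T (int r) i j + e (b r) * T (int r - 1) i j)
                   (T (int s) k l)
        - commutator (T (int r) i j)
                   (T (int s + 1) k l + e (a s) * T (int s) k l + e (b s) * T (int s - 1) k l)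
        = T (int r) k j * T (int s) i l - T (int s) k j * T (int r) i l))"

text \<open>Coefficient of u^(-r) in omega(u) = sum_i T_ii(u), for r \<ge> 1.\<close>
definition omega_coeff :: "nat \<Rightarrow> (nat \<Rightarrow> nat \<Rightarrow> nat \<Rightarrow> 'a::ring_1) \<Rightarrow> nat \<Rightarrow> 'a" where
  "omega_coeff n t r = (\<Sum>i=1..n. t r i i)"

end

theory Submission imports Defs begin

lemma comm_add_left: "commutator (x + y) (z::'a::ring) = commutator x z + commutator y z"
  by (simp add: commutator_def algebra_simps)
lemma comm_add_right: "commutator x (y + (z::'a::ring)) = commutator x y + commutator x z"
  by (simp add: commutator_def algebra_simps)
lemma comm_scal_left: "(\<And>z. c * z = z * c) \<Longrightarrow> commutator (c * y) (z::'a::ring) = c * commutator y z"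
proof -
  assume h: "\<And>z. c * z = z * c"
  have "z * (c * y) = c * (z * y)" by (metis h mult.assoc)
  then show ?thesis by (simp add: commutator_def mult.assoc right_diff_distrib)
qed
lemma comm_scal_right: "(\<And>z. c * z = z * c) \<Longrightarrow> commutator y (c * (z::'a::ring)) = c * commutator y z"
  by (metis (no_types) commutator_def mult.assoc right_diff_distrib)
lemma comm_sum_left: "commutator (\<Sum>i\<in>A. f i) (z::'a::ring) = (\<Sum>i\<in>A. commutator (f i) z)"
  by (induct A rule: infinite_finite_induct) (auto simp: commutator_def algebra_simps)
lemma comm_sum_right: "commutator z (\<Sum>i\<in>A. f i) = (\<Sum>i\<in>A. commutator (z::'a::ring) (f i))"
  by (induct A rule: infinite_finite_induct) (auto simp: commutator_def algebra_simps)

lemma vanish_lemma: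
  fixes X :: "int \<Rightarrow> int \<Rightarrow> 'a::ring_1"
  assumes z: "\<And>p q. p \<le> 0 \<or> q \<le> 0 \<Longrightarrow> X p q = 0"
    and rec: "\<And>r s::nat. X (int r + 1) (int s) = X (int r) (int s + 1) + al r s * X (int r) (int s)
              + be r s * X (int r - 1) (int s) + ga r s * X (int r) (int s - 1)"
  shows "X (int p) (int q) = 0"
proof -
  have "\<forall>p q. p + q = N \<longrightarrow> X (int p) (int q) = 0" for N
  proof (induction N rule: less_induct)
    case (less N)
    have "p + q = N \<longrightarrow> X (int p) (int q) = 0" for p q
    proof (induction p arbitrary: q)
      case 0 then show ?case using z by simp
    next
      case (Suc r)
      show ?case
      proof
        assume N: "Suc r + q = N"
        have a1: "X (int r) (int q + 1) = 0" using Suc[of "Suc q"] N by (simp add: add.commute)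
        have a2: "X (int r) (int q) = 0" using less[of "r+q"] N by simp
        have a3: "X (int r - 1) (int q) = 0"
        proof (cases r)
          case 0 then show ?thesis using z by simp
        next
          case (Suc r') then show ?thesis using less[of "r'+q"] N by simp
        qed
        have a4: "X (int r) (int q - 1) = 0"
        proof (cases q)
          case 0 then show ?thesis using z by simp
        next
          case (Suc q') then show ?thesis using less[of "r+q'"] N by simp
        qed
        show "X (int (Suc r)) (int q) = 0" using rec[of r q] a1 a2 a3 a4 by (simp add: add.commute)
      qed
    qed
    then show ?case by blast
  qed
  then show ?thesis by blast
qed


lemma T_zero_left: "p \<le> 0 \<Longrightarrow> commutator (OY_ext t p i j) (z::'a::ring_1) = 0"
  by (auto simp: OY_ext_def commutator_def)
lemma T_zero_right: "p \<le> 0 \<Longrightarrow> commutator (z::'a::ring_1) (OY_ext t p i j) = 0"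
  by (auto simp: OY_ext_def commutator_def)

theorem mainTheorem3:
  fixes n :: nat and a b :: "nat \<Rightarrow> complex"
    and e :: "complex \<Rightarrow> 'A::ring_1" and t :: "nat \<Rightarrow> nat \<Rightarrow> nat \<Rightarrow> 'A"
  assumes "n \<ge> 1"
    and "b 0 = 0" and "\<And>m. m \<ge> 1 \<Longrightarrow> b m \<noteq> 0"
    and "complex_alg_embedding e"
    and "OY_relations n a b e t"
  shows "\<forall>r s. r \<ge> 1 \<longrightarrow> s \<ge> 1 \<longrightarrow>
           omega_coeff n t r * omega_coeff n t s = omega_coeff n t s * omega_coeff n t r"
proof -
  let ?T = "OY_ext t"
  have hc: "\<And>c z. e c * z = z * e c" using assms(4) unfolding complex_alg_embedding_def by blast
  have eadd: "\<And>x y. e (x + y) = e x + e y" using assms(4) unfolding complex_alg_embedding_def by blast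
  have e1: "e 1 = 1" using assms(4) unfolding complex_alg_embedding_def by blast
  have R: "\<And>r s i j k l. i \<in> {1..n} \<Longrightarrow> j \<in> {1..n} \<Longrightarrow> k \<in> {1..n} \<Longrightarrow> l \<in> {1..n} \<Longrightarrow>
        commutator (?T (int r + 1) i j + e (a r) * ?T (int r) i j + e (b r) * ?T (int r - 1) i j)
                   (?T (int s) k l)
        - commutator (?T (int r) i j)
                   (?T (int s + 1) k l + e (a s) * ?T (int s) k l + e (b s) * ?T (int s - 1) k l)
        = ?T (int r) k j * ?T (int s) i l - ?T (int s) k j * ?T (int r) i l"
    using assms(5) unfolding OY_relations_def Let_def by blast
  have E: "commutator (?T (int r + 1) i j) (?T (int s) k l) + e (a r) * commutator (?T (int r) i j) (?T (int s) k l)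
      + e (b r) * commutator (?T (int r - 1) i j) (?T (int s) k l)
      - commutator (?T (int r) i j) (?T (int s + 1) k l) - e (a s) * commutator (?T (int r) i j) (?T (int s) k l)
      - e (b s) * commutator (?T (int r) i j) (?T (int s - 1) k l)
      = ?T (int r) k j * ?T (int s) i l - ?T (int s) k j * ?T (int r) i l"
    if "i \<in> {1..n}" "j \<in> {1..n}" "k \<in> {1..n}" "l \<in> {1..n}" for r s i j k l
    using R[OF that, of r s]
    by (simp add: comm_add_left comm_add_right comm_scal_left[OF hc] comm_scal_right[OF hc] algebra_simps)
  define D where "D p q = (\<Sum>i\<in>{1..n}. \<Sum>k\<in>{1..n}. commutator (?T p i i) (?T q k k))" for p q
  define F where "F p q = (\<Sum>i\<in>{1..n}. \<Sum>k\<in>{1..n}. commutator (?T p k i) (?T q i k))" for p q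
  have DR0: "D (int r + 1) (int s) + e (a r) * D (int r) (int s) + e (b r) * D (int r - 1) (int s)
      - D (int r) (int s + 1) - e (a s) * D (int r) (int s) - e (b s) * D (int r) (int s - 1) = F (int r) (int s)"
    for r s
  proof -
    have "D (int r + 1) (int s) + e (a r) * D (int r) (int s) + e (b r) * D (int r - 1) (int s)
      - D (int r) (int s + 1) - e (a s) * D (int r) (int s) - e (b s) * D (int r) (int s - 1)
      = (\<Sum>i\<in>{1..n}. \<Sum>k\<in>{1..n}. 
        commutator (?T (int r + 1) i i) (?T (int s) k k) + e (a r) * commutator (?T (int r) i i) (?T (int s) k k)
      + e (b r) * commutator (?T (int r - 1) i i) (?T (int s) k k)
      - commutator (?T (int r) i i) (?T (int s + 1) k k) - e (a s) * commutator (?T (int r) i i) (?T (int s) k k)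
      - e (b s) * commutator (?T (int r) i i) (?T (int s - 1) k k))"
      by (simp add: D_def sum.distrib sum_subtractf sum_distrib_left)
    also have "\<dots> = (\<Sum>i\<in>{1..n}. \<Sum>k\<in>{1..n}. ?T (int r) k i * ?T (int s) i k - ?T (int s) k i * ?T (int r) i k)"
      by (intro sum.cong refl E) auto
    also have "\<dots> = (\<Sum>i\<in>{1..n}. \<Sum>k\<in>{1..n}. ?T (int r) k i * ?T (int s) i k)
         - (\<Sum>i\<in>{1..n}. \<Sum>k\<in>{1..n}. ?T (int s) k i * ?T (int r) i k)"
      by (simp add: sum_subtractf)
    also have "(\<Sum>i\<in>{1..n}. \<Sum>k\<in>{1..n}. ?T (int s) k i * ?T (int r) i k)
         = (\<Sum>i\<in>{1..n}. \<Sum>k\<in>{1..n}. ?T (int s) i k * ?T (int r) k i)"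
      by (rule sum.swap)
    also have "(\<Sum>i\<in>{1..n}. \<Sum>k\<in>{1..n}. ?T (int r) k i * ?T (int s) i k)
         - (\<Sum>i\<in>{1..n}. \<Sum>k\<in>{1..n}. ?T (int s) i k * ?T (int r) k i) = F (int r) (int s)"
      by (simp add: F_def commutator_def sum_subtractf)
    finally show ?thesis .
  qed
  have FR0: "F (int r + 1) (int s) + e (a r) * F (int r) (int s) + e (b r) * F (int r - 1) (int s)
      - F (int r) (int s + 1) - e (a s) * F (int r) (int s) - e (b s) * F (int r) (int s - 1) = D (int r) (int s)"
    for r s
  proof -
    have "F (int r + 1) (int s) + e (a r) * F (int r) (int s) + e (b r) * F (int r - 1) (int s)
      - F (int r) (int s + 1) - e (a s) * F (int r) (int s) - e (b s) * F (int r) (int s - 1)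
      = (\<Sum>i\<in>{1..n}. \<Sum>k\<in>{1..n}. 
        commutator (?T (int r + 1) k i) (?T (int s) i k) + e (a r) * commutator (?T (int r) k i) (?T (int s) i k)
      + e (b r) * commutator (?T (int r - 1) k i) (?T (int s) i k)
      - commutator (?T (int r) k i) (?T (int s + 1) i k) - e (a s) * commutator (?T (int r) k i) (?T (int s) i k)
      - e (b s) * commutator (?T (int r) k i) (?T (int s - 1) i k))"
      by (simp add: F_def sum.distrib sum_subtractf sum_distrib_left)
    also have "\<dots> = (\<Sum>i\<in>{1..n}. \<Sum>k\<in>{1..n}. ?T (int r) i i * ?T (int s) k k - ?T (int s) i i * ?T (int r) k k)"
      by (intro sum.cong refl E) auto
    also have "\<dots> = (\<Sum>i\<in>{1..n}. \<Sum>k\<in>{1..n}. ?T (int r) i i * ?T (int s) k k)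
         - (\<Sum>i\<in>{1..n}. \<Sum>k\<in>{1..n}. ?T (int s) i i * ?T (int r) k k)"
      by (simp add: sum_subtractf)
    also have "(\<Sum>i\<in>{1..n}. \<Sum>k\<in>{1..n}. ?T (int s) i i * ?T (int r) k k)
         = (\<Sum>i\<in>{1..n}. \<Sum>k\<in>{1..n}. ?T (int s) k k * ?T (int r) i i)"
      by (rule sum.swap)
    also have "(\<Sum>i\<in>{1..n}. \<Sum>k\<in>{1..n}. ?T (int r) i i * ?T (int s) k k)
         - (\<Sum>i\<in>{1..n}. \<Sum>k\<in>{1..n}. ?T (int s) k k * ?T (int r) i i) = D (int r) (int s)"
      by (simp add: D_def commutator_def sum_subtractf)
    finally show ?thesis .
  qed
  have DR: "D (int r + 1) (int s) = D (int r) (int s + 1) + F (int r) (int s) - e (a r) * D (int r) (int s)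
     - e (b r) * D (int r - 1) (int s) + e (a s) * D (int r) (int s) + e (b s) * D (int r) (int s - 1)" for r s
  proof -
    have "D (int r + 1) (int s) = (D (int r + 1) (int s) + e (a r) * D (int r) (int s) + e (b r) * D (int r - 1) (int s)
      - D (int r) (int s + 1) - e (a s) * D (int r) (int s) - e (b s) * D (int r) (int s - 1))
      + D (int r) (int s + 1) - e (a r) * D (int r) (int s)
     - e (b r) * D (int r - 1) (int s) + e (a s) * D (int r) (int s) + e (b s) * D (int r) (int s - 1)"
      by (simp add: algebra_simps)
    then show ?thesis unfolding DR0 by (simp add: algebra_simps)
  qed
  have FR: "F (int r + 1) (int s) = F (int r) (int s + 1) + D (int r) (int s) - e (a r) * F (int r) (int s)
     - e (b r) * F (int r - 1) (int s) + e (a s) * F (int r) (int s) + e (b s) * F (int r) (int s - 1)" for r s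
  proof -
    have "F (int r + 1) (int s) = (F (int r + 1) (int s) + e (a r) * F (int r) (int s) + e (b r) * F (int r - 1) (int s)
      - F (int r) (int s + 1) - e (a s) * F (int r) (int s) - e (b s) * F (int r) (int s - 1))
      + F (int r) (int s + 1) - e (a r) * F (int r) (int s)
     - e (b r) * F (int r - 1) (int s) + e (a s) * F (int r) (int s) + e (b s) * F (int r) (int s - 1)"
      by (simp add: algebra_simps)
    then show ?thesis unfolding FR0 by (simp add: algebra_simps)
  qed
  have Dz: "D p q = 0" if "p \<le> 0 \<or> q \<le> 0" for p q
    using that by (auto simp: D_def T_zero_left T_zero_right)
  have Fz: "F p q = 0" if "p \<le> 0 \<or> q \<le> 0" for p q
    using that by (auto simp: F_def T_zero_left T_zero_right)
  define G where "G p q = D p q + F p q" for p q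
  define H where "H p q = D p q - F p q" for p q
  have G0: "G (int p) (int q) = 0" for p q
  proof (rule vanish_lemma[where al = "\<lambda>r s. 1 - e (a r) + e (a s)" and be = "\<lambda>r s. - e (b r)"
        and ga = "\<lambda>r s. e (b s)"])
    show "\<And>p q. p \<le> 0 \<or> q \<le> 0 \<Longrightarrow> G p q = 0" using Dz Fz by (simp add: G_def)
    show "G (int r + 1) (int s) = G (int r) (int s + 1) + (1 - e (a r) + e (a s)) * G (int r) (int s)
      + - e (b r) * G (int r - 1) (int s) + e (b s) * G (int r) (int s - 1)" for r s
      unfolding G_def DR FR by (simp add: algebra_simps)
  qed
  have H0: "H (int p) (int q) = 0" for p q
  proof (rule vanish_lemma[where al = "\<lambda>r s. - 1 - e (a r) + e (a s)" and be = "\<lambda>r s. - e (b r)"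
        and ga = "\<lambda>r s. e (b s)"])
    show "\<And>p q. p \<le> 0 \<or> q \<le> 0 \<Longrightarrow> H p q = 0" using Dz Fz by (simp add: H_def)
    show "H (int r + 1) (int s) = H (int r) (int s + 1) + (- 1 - e (a r) + e (a s)) * H (int r) (int s)
      + - e (b r) * H (int r - 1) (int s) + e (b s) * H (int r) (int s - 1)" for r s
      unfolding H_def DR FR by (simp add: algebra_simps)
  qed
  have D0: "D (int p) (int q) = 0" for p q
  proof -
    have "D (int p) (int q) = e 1 * D (int p) (int q)" by (simp add: e1)
    also have "\<dots> = (e (1/2) + e (1/2)) * D (int p) (int q)"
      using eadd[of "1/2" "1/2"] by simp
    also have "\<dots> = e (1/2) * (G (int p) (int q) + H (int p) (int q))"
      by (simp add: G_def H_def algebra_simps)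
    finally show ?thesis using G0 H0 by simp
  qed
  show ?thesis
  proof (intro allI impI)
    fix r s :: nat assume r: "r \<ge> 1" and s: "s \<ge> 1"
    have om: "omega_coeff n t m = (\<Sum>i\<in>{1..n}. ?T (int m) i i)" if "m \<ge> 1" for m
      using that by (simp add: omega_coeff_def OY_ext_def)
    have "commutator (omega_coeff n t r) (omega_coeff n t s) = D (int r) (int s)"
      unfolding om[OF r] om[OF s] D_def comm_sum_left comm_sum_right by (rule sum.swap)
    then show "omega_coeff n t r * omega_coeff n t s = omega_coeff n t s * omega_coeff n t r"
      using D0 by (simp add: commutator_def)
  qed
qed

end
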